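(* Let $d\ge2$ and let the weights $(J_x)$ be i.i.d. with a good distribution and $\mathbb E|J_x|^{4+\delta}<\infty$ for some $\delta>0$. Let $M_n$ be the (a.s. unique) ground state of the monomer-dimer model on $\mathbb T_n^d$. Then there exist constants $C_1,C_2>0$ such that for all $n\ge 3$, \[C_1n^d\le \operatorname{Var}(H(M_n))\le C_2 n^d.\]
   Context: $\mathbb T_n^d=(\mathbb Z/n\mathbb Z)^d$ with nearest-neighbour edges; weights are attached to its vertices and edges. A matching is a set $M$ of vertices and edges such that every vertex either belongs to $M$ or is an endpoint of exactly one edge of $M$, but not both. $H(M)=\sum_{x\in M}J_x$; the ground state minimises $H$. A good distribution: values in $[\beta,\infty)$, $\beta\in\{-\infty\}\cup\mathbb R$, continuous density $p$ with $p>0$ on $(\beta,\infty)$, and for some $\alpha>1$, $\int_\beta^\infty(p(x-z)/p(x))^\alpha p(x)\,dx$ finite and continuous in $z>0$. *)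

theory Defs
  imports "HOL-Probability.Probability"
begin

text \<open>Vertices of the torus (Z/nZ)^d, represented as lists of length d with entries in {0..<n}.\<close>
definition torus_verts :: "nat \<Rightarrow> nat \<Rightarrow> nat list set" where
  "torus_verts n d = {x. length x = d \<and> (\<forall>i<d. x ! i < n)}"

definition torus_edges :: "nat \<Rightarrow> nat \<Rightarrow> nat list set set" where
  "torus_edges n d = {{x, x[i := (x ! i + 1) mod n]} | x i. x \<in> torus_verts n d \<and> i < d}"

datatype site = Vtx "nat list" | Edg "nat list set"

definition torus_sites :: "nat \<Rightarrow> nat \<Rightarrow> site set" where
  "torus_sites n d = Vtx ` torus_verts n d \<union> Edg ` torus_edges n d"

definition is_matching :: "nat \<Rightarrow> nat \<Rightarrow> site set \<Rightarrow> bool" where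
  "is_matching n d M \<longleftrightarrow> M \<subseteq> torus_sites n d \<and>
     (\<forall>v\<in>torus_verts n d.
        (Vtx v \<in> M \<and> card {e. Edg e \<in> M \<and> v \<in> e} = 0) \<or>
        (Vtx v \<notin> M \<and> card {e. Edg e \<in> M \<and> v \<in> e} = 1))"

definition energy :: "(site \<Rightarrow> real) \<Rightarrow> site set \<Rightarrow> real" where
  "energy J M = (\<Sum>s\<in>M. J s)"

definition ground_energy :: "nat \<Rightarrow> nat \<Rightarrow> (site \<Rightarrow> real) \<Rightarrow> real" where
  "ground_energy n d J = Min {energy J M | M. is_matching n d M}"

definition good_density :: "(real \<Rightarrow> real) \<Rightarrow> ereal \<Rightarrow> bool" where
  "good_density p \<beta> \<longleftrightarrow>
     \<beta> \<noteq> \<infinity> \<and>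
     p \<in> borel_measurable borel \<and>
     prob_space (density lborel (\<lambda>x. ennreal (p x))) \<and>
     (\<forall>x. p x \<ge> 0) \<and>
     (\<forall>x. ereal x < \<beta> \<longrightarrow> p x = 0) \<and>
     continuous_on {x. \<beta> < ereal x} p \<and>
     (\<forall>x. \<beta> < ereal x \<longrightarrow> p x > 0) \<and>
     (\<exists>\<alpha>>1.
        (\<forall>z>0. set_integrable lborel {x. \<beta> < ereal x}
                 (\<lambda>x. (p (x - z) / p x) powr \<alpha> * p x)) \<and>
        continuous_on {0<..}
          (\<lambda>z. set_lebesgue_integral lborel {x. \<beta> < ereal x}
                 (\<lambda>x. (p (x - z) / p x) powr \<alpha> * p x)))"

definition weight_dist :: "(real \<Rightarrow> real) \<Rightarrow> real measure" where
  "weight_dist p = density lborel (\<lambda>x. ennreal (p x))"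

definition weight_field :: "(real \<Rightarrow> real) \<Rightarrow> nat \<Rightarrow> nat \<Rightarrow> (site \<Rightarrow> real) measure" where
  "weight_field p n d = PiM (torus_sites n d) (\<lambda>_. weight_dist p)"

definition variance_of :: "'a measure \<Rightarrow> ('a \<Rightarrow> real) \<Rightarrow> real" where
  "variance_of M X = (\<integral>\<omega>. (X \<omega> - (\<integral>\<omega>'. X \<omega>' \<partial>M))\<^sup>2 \<partial>M)"

end

theory Submission
  imports Defs
begin


lemma verts_eq: "torus_verts n d = {xs. set xs \<subseteq> {..<n} \<and> length xs = d}"
  unfolding torus_verts_def by (auto simp: in_set_conv_nth subset_iff)

lemma finite_verts: "finite (torus_verts n d)"
  unfolding verts_eq by (rule finite_lists_length_eq) simp

lemma card_verts: "card (torus_verts n d) = n ^ d"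
  unfolding verts_eq by (subst card_lists_length_eq) simp_all

definition stepv :: "nat \<Rightarrow> nat list \<Rightarrow> nat \<Rightarrow> nat list" where
  "stepv n x i = x[i := (x ! i + 1) mod n]"

lemma edges_eq: "torus_edges n d = (\<lambda>(x,i). {x, stepv n x i}) ` (torus_verts n d \<times> {..<d})"
  unfolding torus_edges_def stepv_def by auto

lemma finite_edges: "finite (torus_edges n d)"
  unfolding edges_eq using finite_verts by simp

lemma card_edges: "card (torus_edges n d) \<le> d * n ^ d"
proof -
  have "card (torus_edges n d) \<le> card (torus_verts n d \<times> {..<d})"
    unfolding edges_eq by (rule card_image_le) (simp add: finite_verts)
  also have "\<dots> = d * n ^ d" by (simp add: card_cartesian_product card_verts)
  finally show ?thesis .
qed

lemma finite_sites: "finite (torus_sites n d)"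
  unfolding torus_sites_def using finite_verts finite_edges by simp

lemma card_sites: "card (torus_sites n d) \<le> (d + 1) * n ^ d"
proof -
  have "card (torus_sites n d) \<le> card (Vtx ` torus_verts n d) + card (Edg ` torus_edges n d)"
    unfolding torus_sites_def by (rule card_Un_le)
  also have "\<dots> \<le> card (torus_verts n d) + card (torus_edges n d)"
    by (intro add_mono card_image_le finite_verts finite_edges)
  also have "\<dots> \<le> n ^ d + d * n ^ d" using card_edges card_verts by simp
  finally show ?thesis by simp
qed

lemma stepv_in:
  assumes "x \<in> torus_verts n d" "i < d"
  shows "stepv n x i \<in> torus_verts n d"
proof -
  have len: "length x = d" and all: "\<forall>j<d. x ! j < n" using assms(1) unfolding torus_verts_def by auto
  have "x ! i < n" using all assms(2) by blast
  then have n: "n > 0" by simp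
  have "\<forall>j<d. stepv n x i ! j < n"
  proof (intro allI impI)
    fix j assume j: "j < d"
    show "stepv n x i ! j < n"
    proof (cases "j = i")
      case True then show ?thesis using n len assms(2) by (simp add: stepv_def)
    next
      case False then show ?thesis using all j by (simp add: stepv_def)
    qed
  qed
  moreover have "length (stepv n x i) = d" using len by (simp add: stepv_def)
  ultimately show ?thesis unfolding torus_verts_def by simp
qed

lemma stepv_neq:
  assumes "x \<in> torus_verts n d" "i < d" "n \<ge> 2"
  shows "stepv n x i \<noteq> x"
proof
  assume eq: "stepv n x i = x"
  have len: "length x = d" and all: "\<forall>j<d. x ! j < n" using assms(1) unfolding torus_verts_def by auto
  have xi: "x ! i < n" using all assms(2) by blast
  have "stepv n x i ! i = (x ! i + 1) mod n" using len assms(2) by (simp add: stepv_def)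
  then have m: "(x ! i + 1) mod n = x ! i" using eq by simp
  show False
  proof (cases "x ! i + 1 < n")
    case True
    then show False using m by simp
  next
    case False
    then have "x ! i + 1 = n" using xi by linarith
    then have "(x ! i + 1) mod n = 0" by simp
    then have "x ! i = 0" using m by simp
    then show False using \<open>x ! i + 1 = n\<close> assms(3) by simp
  qed
qed

lemma edgeE:
  assumes "e \<in> torus_edges n d"
  obtains x i where "x \<in> torus_verts n d" "i < d" "e = {x, stepv n x i}"
proof -
  from assms obtain p where p: "e = (\<lambda>(x,i). {x, stepv n x i}) p" "p \<in> torus_verts n d \<times> {..<d}"
    unfolding edges_eq by (rule imageE)
  obtain x i where xi: "p = (x, i)" by (cases p)
  have "x \<in> torus_verts n d" "i < d" "e = {x, stepv n x i}" using p unfolding xi by auto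
  then show ?thesis by (rule that)
qed

lemma edge_sub: "e \<in> torus_edges n d \<Longrightarrow> e \<subseteq> torus_verts n d"
proof -
  assume "e \<in> torus_edges n d"
  then obtain x i where "x \<in> torus_verts n d" "i < d" "e = {x, stepv n x i}" by (rule edgeE)
  then show ?thesis using stepv_in by simp
qed

lemma edge_other:
  assumes "e \<in> torus_edges n d" "v \<in> e" "n \<ge> 2"
  shows "\<exists>w. w \<noteq> v \<and> e = {v, w}"
proof -
  obtain x i where x: "x \<in> torus_verts n d" "i < d" and e: "e = {x, stepv n x i}"
    using assms(1) by (rule edgeE)
  have ne: "stepv n x i \<noteq> x" using stepv_neq[OF x assms(3)] .
  show ?thesis
  proof (cases "v = x")
    case True
    have "stepv n x i \<noteq> v \<and> e = {v, stepv n x i}" using ne e True by simp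
    then show ?thesis by blast
  next
    case False
    then have v: "v = stepv n x i" using assms(2) e by simp
    have "x \<noteq> v \<and> e = {v, x}" using ne e v by (simp add: insert_commute)
    then show ?thesis by blast
  qed
qed

definition stepd :: "nat \<Rightarrow> nat list \<Rightarrow> nat \<Rightarrow> nat list" where
  "stepd n x i = x[i := (x ! i + n - 1) mod n]"

lemma stepd_stepv:
  assumes "x \<in> torus_verts n d" "i < d"
  shows "stepd n (stepv n x i) i = x"
proof -
  have xi: "x ! i < n" and len: "length x = d" using assms unfolding torus_verts_def by auto
  then have n: "n \<ge> 1" by simp
  have "((x ! i + 1) mod n + n - 1) mod n = ((x ! i + 1) mod n + (n - 1)) mod n" using n by simp
  also have "\<dots> = (x ! i + 1 + (n - 1)) mod n" by (simp add: mod_add_left_eq)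
  also have "x ! i + 1 + (n - 1) = x ! i + n" using n by simp
  also have "(x ! i + n) mod n = x ! i" using xi by simp
  finally have "((x ! i + 1) mod n + n - 1) mod n = x ! i" .
  then show ?thesis using assms(2) len unfolding stepd_def stepv_def by simp
qed

lemma edges_at:
  assumes "v \<in> torus_verts n d"
  shows "{e \<in> torus_edges n d. v \<in> e} \<subseteq>
    (\<lambda>i. {v, stepv n v i}) ` {..<d} \<union> (\<lambda>i. {stepd n v i, v}) ` {..<d}"
proof
  fix e assume "e \<in> {e \<in> torus_edges n d. v \<in> e}"
  then obtain x i where x: "x \<in> torus_verts n d" "i < d" and e: "e = {x, stepv n x i}" and v: "v \<in> e"
    unfolding edges_eq by auto
  show "e \<in> (\<lambda>i. {v, stepv n v i}) ` {..<d} \<union> (\<lambda>i. {stepd n v i, v}) ` {..<d}"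
  proof (cases "v = x")
    case True then show ?thesis using e x by auto
  next
    case False
    then have "v = stepv n x i" using v e by auto
    then have "x = stepd n v i" using stepd_stepv[OF x] by simp
    then show ?thesis using e x \<open>v = stepv n x i\<close> by auto
  qed
qed

lemma card_edges_at:
  assumes "v \<in> torus_verts n d"
  shows "card {e \<in> torus_edges n d. v \<in> e} \<le> 2 * d"
proof -
  have "card {e \<in> torus_edges n d. v \<in> e} \<le>
      card ((\<lambda>i. {v, stepv n v i}) ` {..<d} \<union> (\<lambda>i. {stepd n v i, v}) ` {..<d})"
    by (rule card_mono[OF _ edges_at[OF assms]]) simp
  also have "\<dots> \<le> card ((\<lambda>i. {v, stepv n v i}) ` {..<d}) + card ((\<lambda>i. {stepd n v i, v}) ` {..<d})"
    by (rule card_Un_le)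
  also have "\<dots> \<le> d + d" by (intro add_mono card_image_le[THEN order_trans]) auto
  finally show ?thesis by simp
qed

lemma nbrs_at:
  assumes "v \<in> torus_verts n d"
  shows "\<Union>{e \<in> torus_edges n d. v \<in> e} - {v} \<subseteq> stepv n v ` {..<d} \<union> (\<lambda>i. stepd n v i) ` {..<d}"
  using edges_at[OF assms] by blast

lemma card_nbrs_at:
  assumes "v \<in> torus_verts n d"
  shows "card (\<Union>{e \<in> torus_edges n d. v \<in> e} - {v}) \<le> 2 * d"
proof -
  have "card (\<Union>{e \<in> torus_edges n d. v \<in> e} - {v}) \<le> card (stepv n v ` {..<d} \<union> (\<lambda>i. stepd n v i) ` {..<d})"
    by (rule card_mono[OF _ nbrs_at[OF assms]]) simp
  also have "\<dots> \<le> card (stepv n v ` {..<d}) + card ((\<lambda>i. stepd n v i) ` {..<d})"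
    by (rule card_Un_le)
  also have "\<dots> \<le> d + d" by (intro add_mono card_image_le[THEN order_trans]) auto
  finally show ?thesis by simp
qed

lemma match_sub: "is_matching n d M \<Longrightarrow> M \<subseteq> torus_sites n d"
  unfolding is_matching_def by blast

lemma match_fin: "is_matching n d M \<Longrightarrow> finite M"
  by (rule finite_subset[OF match_sub finite_sites])

lemma matchings_fin: "finite {M. is_matching n d M}"
proof -
  have "{M. is_matching n d M} \<subseteq> Pow (torus_sites n d)" using match_sub by blast
  moreover have "finite (Pow (torus_sites n d))" using finite_sites by simp
  ultimately show ?thesis by (rule finite_subset)
qed

lemma match_ex: "is_matching n d (Vtx ` torus_verts n d)"
proof -
  have e: "{e. Edg e \<in> Vtx ` torus_verts n d \<and> v \<in> e} = {}" for v by auto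
  show ?thesis unfolding is_matching_def
  proof (intro conjI ballI)
    show "Vtx ` torus_verts n d \<subseteq> torus_sites n d" unfolding torus_sites_def by blast
    fix v assume "v \<in> torus_verts n d"
    then show "Vtx v \<in> Vtx ` torus_verts n d \<and> card {e. Edg e \<in> Vtx ` torus_verts n d \<and> v \<in> e} = 0 \<or>
      Vtx v \<notin> Vtx ` torus_verts n d \<and> card {e. Edg e \<in> Vtx ` torus_verts n d \<and> v \<in> e} = 1"
      by (simp add: e)
  qed
qed

lemma ge_eq: "ground_energy n d J = Min ((\<lambda>M. energy J M) ` {M. is_matching n d M})"
  unfolding ground_energy_def by (simp add: setcompr_eq_image)

lemma ge_le: "is_matching n d M \<Longrightarrow> ground_energy n d J \<le> energy J M"
  unfolding ge_eq by (rule Min_le) (simp_all add: matchings_fin)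

lemma ge_att: "\<exists>M. is_matching n d M \<and> ground_energy n d J = energy J M"
proof -
  have "ground_energy n d J \<in> (\<lambda>M. energy J M) ` {M. is_matching n d M}"
    unfolding ge_eq by (rule Min_in) (use matchings_fin match_ex in blast)+
  then show ?thesis by blast
qed

lemma energy_upd:
  assumes "finite M"
  shows "energy (J(s:=t)) M = energy J M + (if s \<in> M then t - J s else 0)"
  unfolding energy_def
proof (cases "s \<in> M")
  case True
  have 1: "sum (J(s:=t)) M = t + sum (J(s:=t)) (M-{s})"
    using sum.remove[OF assms True, of "J(s:=t)"] by simp
  have 2: "sum (J(s:=t)) (M-{s}) = sum J (M-{s})" by (intro sum.cong) auto
  have 3: "sum J M = J s + sum J (M-{s})" using sum.remove[OF assms True] .
  show "sum (J(s:=t)) M = sum J M + (if s \<in> M then t - J s else 0)"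
    unfolding 1 2 3 using True by simp
next
  case False
  have "sum (J(s:=t)) M = sum J M" using False by (intro sum.cong) auto
  then show "sum (J(s:=t)) M = sum J M + (if s \<in> M then t - J s else 0)" using False by simp
qed

lemma ge_upd_le: "ground_energy n d (J(s:=t)) \<le> ground_energy n d J + \<bar>t - J s\<bar>"
proof -
  obtain M where M: "is_matching n d M" "ground_energy n d J = energy J M" using ge_att by blast
  have "ground_energy n d (J(s:=t)) \<le> energy (J(s:=t)) M" by (rule ge_le[OF M(1)])
  also have "\<dots> = energy J M + (if s \<in> M then t - J s else 0)" by (rule energy_upd[OF match_fin[OF M(1)]])
  also have "\<dots> \<le> ground_energy n d J + \<bar>t - J s\<bar>" using M(2) by auto
  finally show ?thesis .
qed

lemma ge_lip: "\<bar>ground_energy n d J - ground_energy n d (J(s:=t))\<bar> \<le> \<bar>J s - t\<bar>"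
proof -
  have 1: "ground_energy n d (J(s:=t)) \<le> ground_energy n d J + \<bar>t - J s\<bar>" by (rule ge_upd_le)
  have "ground_energy n d ((J(s:=t))(s:=J s)) \<le> ground_energy n d (J(s:=t)) + \<bar>J s - (J(s:=t)) s\<bar>"
    by (rule ge_upd_le)
  then have 2: "ground_energy n d J \<le> ground_energy n d (J(s:=t)) + \<bar>J s - t\<bar>" by simp
  show ?thesis using 1 2 by linarith
qed

lemma ge_mono:
  assumes "t1 \<le> t2"
  shows "ground_energy n d (J(s:=t1)) \<le> ground_energy n d (J(s:=t2))"
proof -
  obtain M where M: "is_matching n d M" "ground_energy n d (J(s:=t2)) = energy (J(s:=t2)) M" using ge_att by blast
  have "ground_energy n d (J(s:=t1)) \<le> energy ((J(s:=t2))(s:=t1)) M" using ge_le[OF M(1)] by simp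
  also have "\<dots> = energy (J(s:=t2)) M + (if s \<in> M then t1 - (J(s:=t2)) s else 0)"
    by (rule energy_upd[OF match_fin[OF M(1)]])
  also have "\<dots> \<le> ground_energy n d (J(s:=t2))" using M(2) assms by auto
  finally show ?thesis .
qed

definition cov :: "site set \<Rightarrow> nat list \<Rightarrow> nat list set set" where
  "cov M u = {e. Edg e \<in> M \<and> u \<in> e}"

lemma cov_fin:
  assumes "M \<subseteq> torus_sites n d" shows "finite (cov M u)"
proof -
  have "cov M u \<subseteq> torus_edges n d" using assms unfolding cov_def torus_sites_def by auto
  then show ?thesis using finite_edges finite_subset by blast
qed

lemma match_cov: "is_matching n d M \<Longrightarrow> u \<in> torus_verts n d \<Longrightarrow>
  (Vtx u \<in> M \<and> card (cov M u) = 0) \<or> (Vtx u \<notin> M \<and> card (cov M u) = 1)"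
  unfolding is_matching_def cov_def by blast

lemma match_covI:
  assumes "M \<subseteq> torus_sites n d"
    "\<And>u. u \<in> torus_verts n d \<Longrightarrow> (Vtx u \<in> M \<and> card (cov M u) = 0) \<or> (Vtx u \<notin> M \<and> card (cov M u) = 1)"
  shows "is_matching n d M"
  using assms unfolding is_matching_def cov_def by blast

lemma covered_single:
  assumes "is_matching n d M" "u \<in> torus_verts n d" "Edg e \<in> M" "u \<in> e"
  shows "Vtx u \<notin> M" "cov M u = {e}"
proof -
  have fin: "finite (cov M u)" using cov_fin[OF match_sub[OF assms(1)]] .
  have ein: "e \<in> cov M u" using assms unfolding cov_def by simp
  then have "card (cov M u) \<noteq> 0" using fin by auto
  then have c: "Vtx u \<notin> M \<and> card (cov M u) = 1" using match_cov[OF assms(1,2)] by auto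
  then show "Vtx u \<notin> M" by simp
  from c obtain e' where "cov M u = {e'}" using card_1_singletonE by blast
  then show "cov M u = {e}" using ein by simp
qed

lemma exchange:
  assumes n: "n \<ge> 2" and M: "is_matching n d M" and v: "v \<in> torus_verts n d" and nv: "Vtx v \<notin> M"
  shows "\<exists>e w. e \<in> torus_edges n d \<and> v \<in> e \<and> w \<in> e \<and> w \<noteq> v \<and>
     is_matching n d (insert (Vtx v) (insert (Vtx w) (M - {Edg e}))) \<and>
     energy J (insert (Vtx v) (insert (Vtx w) (M - {Edg e}))) = energy J M - J (Edg e) + J (Vtx v) + J (Vtx w)"
proof -
  have Ms: "M \<subseteq> torus_sites n d" using match_sub[OF M] .
  have "card (cov M v) = 1" using match_cov[OF M v] nv by auto
  then obtain e where cv: "cov M v = {e}" using card_1_singletonE by blast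
  then have eM: "Edg e \<in> M" and ve: "v \<in> e" unfolding cov_def by auto
  have eE: "e \<in> torus_edges n d" using Ms eM unfolding torus_sites_def by auto
  obtain w where wv: "w \<noteq> v" and e: "e = {v, w}" using edge_other[OF eE ve n] by blast
  have we: "w \<in> e" using e by simp
  have wV: "w \<in> torus_verts n d" using edge_sub[OF eE] we by blast
  have nw: "Vtx w \<notin> M" and cw: "cov M w = {e}" using covered_single[OF M wV eM we] by auto
  let ?M' = "insert (Vtx v) (insert (Vtx w) (M - {Edg e}))"
  have covM': "cov ?M' u = cov M u - {e}" for u unfolding cov_def by auto
  have "is_matching n d ?M'"
  proof (rule match_covI)
    show "?M' \<subseteq> torus_sites n d" using Ms v wV unfolding torus_sites_def by auto
    fix u assume u: "u \<in> torus_verts n d"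
    show "(Vtx u \<in> ?M' \<and> card (cov ?M' u) = 0) \<or> (Vtx u \<notin> ?M' \<and> card (cov ?M' u) = 1)"
    proof (cases "u = v \<or> u = w")
      case True
      then have "cov M u = {e}" using cv cw by auto
      then have "cov ?M' u = {}" using covM' by simp
      then show ?thesis using True by auto
    next
      case False
      then have "u \<notin> e" using e by simp
      then have "cov ?M' u = cov M u" unfolding covM' cov_def by auto
      moreover have "Vtx u \<in> ?M' \<longleftrightarrow> Vtx u \<in> M" using False by auto
      ultimately show ?thesis using match_cov[OF M u] by simp
    qed
  qed
  moreover have "energy J ?M' = energy J M - J (Edg e) + J (Vtx v) + J (Vtx w)"
  proof -
    have fM: "finite M" using match_fin[OF M] .
    have n1: "Vtx v \<notin> insert (Vtx w) (M - {Edg e})" using nv wv by auto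
    have n2: "Vtx w \<notin> M - {Edg e}" using nw by auto
    have "energy J ?M' = J (Vtx v) + (J (Vtx w) + energy J (M - {Edg e}))"
      unfolding energy_def using fM n1 n2 by simp
    moreover have "energy J M = J (Edg e) + energy J (M - {Edg e})"
      unfolding energy_def using sum.remove[OF fM eM] .
    ultimately show ?thesis by simp
  qed
  ultimately show ?thesis using eE ve we wv by blast
qed

lemma key_incr:
  assumes n: "n \<ge> 2" and v: "v \<in> torus_verts n d"
    and G: "\<forall>e\<in>torus_edges n d. v \<in> e \<longrightarrow> (\<forall>w\<in>e. w \<noteq> v \<longrightarrow> J (Vtx v) + J (Vtx w) < J (Edg e))"
  shows "ground_energy n d (J(Vtx v := t1)) \<le> ground_energy n d J - J (Vtx v) + t1"
proof -
  obtain M where M: "is_matching n d M" "ground_energy n d J = energy J M" using ge_att by blast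
  have inM: "Vtx v \<in> M"
  proof (rule ccontr)
    assume "Vtx v \<notin> M"
    from exchange[OF n M(1) v this, of J] obtain e w where ew: "e \<in> torus_edges n d" "v \<in> e" "w \<in> e" "w \<noteq> v"
      and M': "is_matching n d (insert (Vtx v) (insert (Vtx w) (M - {Edg e})))"
      and en: "energy J (insert (Vtx v) (insert (Vtx w) (M - {Edg e}))) = energy J M - J (Edg e) + J (Vtx v) + J (Vtx w)"
      by blast
    have "J (Vtx v) + J (Vtx w) < J (Edg e)" using G ew by blast
    moreover have "ground_energy n d J \<le> energy J (insert (Vtx v) (insert (Vtx w) (M - {Edg e})))"
      by (rule ge_le[OF M'])
    ultimately show False using en M(2) by linarith
  qed
  have "ground_energy n d (J(Vtx v := t1)) \<le> energy (J(Vtx v := t1)) M" by (rule ge_le[OF M(1)])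
  also have "\<dots> = energy J M + (t1 - J (Vtx v))"
    using energy_upd[OF match_fin[OF M(1)]] inM by simp
  finally show ?thesis using M(2) by simp
qed




lemma variance_alt:
  assumes "prob_space M" "integrable M f" "integrable M (\<lambda>x. (f x)\<^sup>2)"
  shows "variance_of M f = (\<integral>x. (f x)\<^sup>2 \<partial>M) - (\<integral>x. f x \<partial>M)\<^sup>2"
proof -
  interpret prob_space M by fact
  let ?m = "\<integral>x. f x \<partial>M"
  have "(\<lambda>x. (f x - ?m)\<^sup>2) = (\<lambda>x. (f x)\<^sup>2 - 2 * ?m * f x + ?m\<^sup>2)"
    by (auto simp: power2_eq_square algebra_simps)
  then have "variance_of M f = (\<integral>x. (f x)\<^sup>2 - 2 * ?m * f x + ?m\<^sup>2 \<partial>M)"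
    by (simp add: variance_of_def)
  also have "\<dots> = (\<integral>x. (f x)\<^sup>2 \<partial>M) - 2 * ?m * ?m + ?m\<^sup>2"
    using assms by (simp add: prob_space)
  finally show ?thesis by (simp add: power2_eq_square)
qed

lemma variance_nonneg: "variance_of M f \<ge> 0"
  unfolding variance_of_def by (rule integral_nonneg_AE) auto

lemma variance_le_const:
  assumes "prob_space M" "integrable M f" "integrable M (\<lambda>x. (f x)\<^sup>2)"
  shows "variance_of M f \<le> (\<integral>x. (f x - c)\<^sup>2 \<partial>M)"
proof -
  interpret prob_space M by fact
  let ?m = "\<integral>x. f x \<partial>M"
  have "(\<lambda>x. (f x - c)\<^sup>2) = (\<lambda>x. (f x)\<^sup>2 - 2 * c * f x + c\<^sup>2)"
    by (auto simp: power2_eq_square algebra_simps)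
  then have "(\<integral>x. (f x - c)\<^sup>2 \<partial>M) = (\<integral>x. (f x)\<^sup>2 - 2 * c * f x + c\<^sup>2 \<partial>M)"
    by simp
  also have "\<dots> = (\<integral>x. (f x)\<^sup>2 \<partial>M) - 2 * c * ?m + c\<^sup>2"
    using assms by (simp add: prob_space)
  finally have "(\<integral>x. (f x - c)\<^sup>2 \<partial>M) = (\<integral>x. (f x)\<^sup>2 \<partial>M) - 2 * c * ?m + c\<^sup>2" .
  moreover have "variance_of M f = (\<integral>x. (f x)\<^sup>2 \<partial>M) - ?m\<^sup>2"
    using variance_alt assms by blast
  moreover have "0 \<le> (?m - c)\<^sup>2" by simp
  ultimately show ?thesis by (simp add: power2_eq_square algebra_simps)
qed

lemma jensen_sq:
  fixes f :: "'a \<Rightarrow> real"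
  assumes "prob_space M" "integrable M f" "integrable M (\<lambda>x. (f x)\<^sup>2)"
  shows "(\<integral>x. f x \<partial>M)\<^sup>2 \<le> (\<integral>x. (f x)\<^sup>2 \<partial>M)"
  using variance_alt[of M f] assms variance_nonneg[of M f] by simp

definition lip1 :: "(real \<Rightarrow> real) \<Rightarrow> bool" where
  "lip1 \<phi> \<longleftrightarrow> (\<forall>s t. \<bar>\<phi> s - \<phi> t\<bar> \<le> \<bar>s - t\<bar>)"

lemma lip1_measurable:
  assumes "lip1 \<phi>" shows "\<phi> \<in> borel_measurable borel"
proof -
  have "1-lipschitz_on UNIV \<phi>"
    using assms unfolding lip1_def lipschitz_on_def dist_real_def by auto
  then have "continuous_on UNIV \<phi>" by (rule lipschitz_on_continuous_on)
  then show ?thesis by (rule borel_measurable_continuous_onI)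
qed

locale wsp =
  fixes \<mu> :: "real measure"
  assumes Pmu: "prob_space \<mu>" and Smu: "sets \<mu> = sets borel"
    and M2: "integrable \<mu> (\<lambda>t. t\<^sup>2)"
begin

lemma space_mu[simp]: "space \<mu> = UNIV"
  using sets_eq_imp_space_eq[OF Smu] by simp

lemma meas_mu: "f \<in> borel_measurable borel \<Longrightarrow> f \<in> borel_measurable \<mu>"
  using measurable_cong_sets[OF Smu refl] by blast

lemma M1: "integrable \<mu> (\<lambda>t. t)"
proof (rule Bochner_Integration.integrable_bound[of _ "\<lambda>t. 1 + t\<^sup>2"])
  show "integrable \<mu> (\<lambda>t. 1 + t\<^sup>2)" using M2 Pmu
    by (intro Bochner_Integration.integrable_add[OF _ M2]) (auto simp: prob_space.finite_measure finite_measure.integrable_const)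
  show "(\<lambda>t. t) \<in> borel_measurable \<mu>" by (rule meas_mu) simp
  show "AE x in \<mu>. norm x \<le> norm (1 + x\<^sup>2)"
  proof (rule AE_I2)
    fix x :: real
    have "\<bar>x\<bar> \<le> 1 + x\<^sup>2"
    proof (cases "\<bar>x\<bar> \<le> 1")
      case True then show ?thesis using zero_le_power2[of x] by linarith
    next
      case False then have "1 * \<bar>x\<bar> \<le> \<bar>x\<bar> * \<bar>x\<bar>" by (intro mult_right_mono) auto
      then show ?thesis by (simp add: power2_eq_square)
    qed
    then show "norm x \<le> norm (1 + x\<^sup>2)" by simp
  qed
qed

lemma lip1_int:
  assumes "lip1 \<phi>"
  shows "\<phi> \<in> borel_measurable \<mu>" "integrable \<mu> \<phi>" "integrable \<mu> (\<lambda>t. (\<phi> t)\<^sup>2)"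
proof -
  show m: "\<phi> \<in> borel_measurable \<mu>" using lip1_measurable[OF assms] meas_mu by blast
  have b: "\<bar>\<phi> t\<bar> \<le> \<bar>\<phi> 0\<bar> + \<bar>t\<bar>" for t
    using assms unfolding lip1_def by (smt (verit) diff_zero)
  have fin: "finite_measure \<mu>" using Pmu prob_space.finite_measure by blast
  show "integrable \<mu> \<phi>"
  proof (rule Bochner_Integration.integrable_bound[of _ "\<lambda>t. \<bar>\<phi> 0\<bar> + \<bar>t\<bar>"])
    show "integrable \<mu> (\<lambda>t. \<bar>\<phi> 0\<bar> + \<bar>t\<bar>)" using M1 fin
      by (intro Bochner_Integration.integrable_add integrable_abs) (auto simp: finite_measure.integrable_const)
  qed (use m b in auto)
  show "integrable \<mu> (\<lambda>t. (\<phi> t)\<^sup>2)"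
  proof (rule Bochner_Integration.integrable_bound[of _ "\<lambda>t. 2 * (\<phi> 0)\<^sup>2 + 2 * t\<^sup>2"])
    show "integrable \<mu> (\<lambda>t. 2 * (\<phi> 0)\<^sup>2 + 2 * t\<^sup>2)" using M2 fin
      by (intro Bochner_Integration.integrable_add integrable_mult_right) (auto simp: finite_measure.integrable_const)
    show "(\<lambda>t. (\<phi> t)\<^sup>2) \<in> borel_measurable \<mu>" using m by measurable
    show "AE x in \<mu>. norm ((\<phi> x)\<^sup>2) \<le> norm (2 * (\<phi> 0)\<^sup>2 + 2 * x\<^sup>2)"
    proof (rule AE_I2)
      fix x
      have "(\<phi> x)\<^sup>2 \<le> (\<bar>\<phi> 0\<bar> + \<bar>x\<bar>)\<^sup>2"
        using b[of x] by (metis abs_ge_zero abs_le_square_iff abs_of_nonneg add_nonneg_nonneg order_trans)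
      also have "\<dots> = 2 * (\<phi> 0)\<^sup>2 + 2 * x\<^sup>2 - (\<bar>\<phi> 0\<bar> - \<bar>x\<bar>)\<^sup>2"
        by (simp add: power2_eq_square algebra_simps)
      also have "\<dots> \<le> 2 * (\<phi> 0)\<^sup>2 + 2 * x\<^sup>2" by simp
      finally show "norm ((\<phi> x)\<^sup>2) \<le> norm (2 * (\<phi> 0)\<^sup>2 + 2 * x\<^sup>2)" by simp
    qed
  qed
qed

abbreviation PP :: "'i set \<Rightarrow> ('i \<Rightarrow> real) measure" where
  "PP I \<equiv> PiM I (\<lambda>_. \<mu>)"

lemma PS: "product_prob_space (\<lambda>_::'i. \<mu>)"
  unfolding product_prob_space_def product_prob_space_axioms_def product_sigma_finite_def
  using Pmu prob_space_imp_sigma_finite by auto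

lemma prob_PP: "prob_space (PP I)"
  by (rule prob_space_PiM) (rule Pmu)

lemma space_PP: "space (PP I) = PiE I (\<lambda>_. UNIV)"
  by (simp add: space_PiM)

lemma upd_in: "x \<in> space (PP I) \<Longrightarrow> x(i:=t) \<in> space (PP (insert i I))"
  by (auto simp: space_PP PiE_iff extensional_def)

lemma upd_in': "x \<in> space (PP I) \<Longrightarrow> i \<in> I \<Longrightarrow> x(i:=t) \<in> space (PP I)"
  using upd_in[of x I i t] by (simp add: insert_absorb)

lemma meas_upd1: "(\<lambda>x. x(i:=t)) \<in> measurable (PP I) (PP (insert i I))"
  by (rule measurable_fun_upd[where J=I]) auto

lemma meas_upd2: "(\<lambda>(x,t). x(i:=t)) \<in> measurable (PP I \<Otimes>\<^sub>M \<mu>) (PP (insert i I))"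
proof -
  have "(\<lambda>z. (fst z)(i:=snd z)) \<in> measurable (PP I \<Otimes>\<^sub>M \<mu>) (PP (insert i I))"
    by (rule measurable_fun_upd[where J=I]) auto
  then show ?thesis by (simp add: case_prod_beta')
qed

lemma meas_upd3: "x \<in> space (PP I) \<Longrightarrow> (\<lambda>t. x(i:=t)) \<in> measurable \<mu> (PP (insert i I))"
  by (rule measurable_fun_upd[where J=I]) auto

lemma comp_int:
  fixes g :: "real \<Rightarrow> real"
  assumes "i \<in> I" "g \<in> borel_measurable \<mu>"
  shows "integrable (PP I) (\<lambda>x. g (x i)) \<longleftrightarrow> integrable \<mu> g"
    and "(\<integral>x. g (x i) \<partial>PP I) = (\<integral>t. g t \<partial>\<mu>)"
proof -
  have d: "distr (PP I) \<mu> (\<lambda>x. x i) = \<mu>"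
    by (rule distr_PiM_component) (use Pmu assms in auto)
  have m: "(\<lambda>x. x i) \<in> measurable (PP I) \<mu>" using assms by simp
  show "integrable (PP I) (\<lambda>x. g (x i)) \<longleftrightarrow> integrable \<mu> g"
    using integrable_distr_eq[OF m, of g] d assms by simp
  show "(\<integral>x. g (x i) \<partial>PP I) = (\<integral>t. g t \<partial>\<mu>)"
    using integral_distr[OF m, of g] d assms by simp
qed

definition lipP :: "'i set \<Rightarrow> (('i \<Rightarrow> real) \<Rightarrow> real) \<Rightarrow> bool" where
  "lipP I f \<longleftrightarrow> f \<in> borel_measurable (PP I) \<and>
     (\<forall>x\<in>space (PP I). \<forall>i\<in>I. \<forall>t. \<bar>f x - f (x(i:=t))\<bar> \<le> \<bar>x i - t\<bar>)"

lemma telescope: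
  assumes "lipP I f" "finite J" "J \<subseteq> I"
  shows "x \<in> space (PP I) \<Longrightarrow> y \<in> space (PP I) \<Longrightarrow> (\<forall>i\<in>I-J. x i = y i) \<Longrightarrow>
     \<bar>f x - f y\<bar> \<le> (\<Sum>i\<in>J. \<bar>x i - y i\<bar>)"
  using assms(2,3)
proof (induction J arbitrary: x rule: finite_induct)
  case empty
  then have "x = y" by (intro PiE_ext[of x I "\<lambda>_. UNIV" y]) (auto simp: space_PP)
  then show ?case by simp
next
  case (insert j J)
  let ?z = "x(j := y j)"
  have jI: "j \<in> I" using insert by auto
  have z: "?z \<in> space (PP I)" using upd_in'[OF insert.prems(1) jI] .
  have "\<forall>i\<in>I-J. ?z i = y i" using insert.prems by auto
  then have IH: "\<bar>f ?z - f y\<bar> \<le> (\<Sum>i\<in>J. \<bar>?z i - y i\<bar>)"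
    using insert z by blast
  have "(\<Sum>i\<in>J. \<bar>?z i - y i\<bar>) = (\<Sum>i\<in>J. \<bar>x i - y i\<bar>)"
    using insert.hyps by (intro sum.cong) auto
  moreover have "\<bar>f x - f ?z\<bar> \<le> \<bar>x j - y j\<bar>"
    using assms(1) insert.prems(1) jI unfolding lipP_def by blast
  ultimately show ?case using IH insert.hyps by simp
qed

lemma lipP_int:
  assumes "finite I" "lipP I f"
  shows "integrable (PP I) f" "integrable (PP I) (\<lambda>x. (f x)\<^sup>2)"
proof -
  define x0 where "x0 = (\<lambda>i\<in>I. 0::real)"
  have x0: "x0 \<in> space (PP I)" by (simp add: space_PP x0_def)
  have m: "f \<in> borel_measurable (PP I)" using assms unfolding lipP_def by blast
  have b: "\<bar>f x\<bar> \<le> \<bar>f x0\<bar> + (\<Sum>i\<in>I. \<bar>x i\<bar>)" if x: "x \<in> space (PP I)" for x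
  proof -
    have "\<bar>f x - f x0\<bar> \<le> (\<Sum>i\<in>I. \<bar>x i - x0 i\<bar>)"
      using telescope[OF assms(2) assms(1) order_refl x x0] by simp
    also have "\<dots> = (\<Sum>i\<in>I. \<bar>x i\<bar>)" by (intro sum.cong) (auto simp: x0_def)
    finally show ?thesis by linarith
  qed
  have intc: "\<And>i. i \<in> I \<Longrightarrow> integrable (PP I) (\<lambda>x. \<bar>x i\<bar>)"
  proof -
    fix i assume i: "i \<in> I"
    have "(\<lambda>t. \<bar>t\<bar>) \<in> borel_measurable \<mu>" by (rule meas_mu) simp
    from comp_int(1)[OF i this] integrable_abs[OF M1] show "integrable (PP I) (\<lambda>x. \<bar>x i\<bar>)" by simp
  qed
  have intc2: "\<And>i. i \<in> I \<Longrightarrow> integrable (PP I) (\<lambda>x. (x i)\<^sup>2)"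
  proof -
    fix i assume i: "i \<in> I"
    have "(\<lambda>t. t\<^sup>2) \<in> borel_measurable \<mu>" by (rule meas_mu) simp
    from comp_int(1)[OF i this] M2 show "integrable (PP I) (\<lambda>x. (x i)\<^sup>2)" by simp
  qed
  have fin: "finite_measure (PP I)" using prob_PP prob_space.finite_measure by blast
  show "integrable (PP I) f"
  proof (rule Bochner_Integration.integrable_bound[of _ "\<lambda>x. \<bar>f x0\<bar> + (\<Sum>i\<in>I. \<bar>x i\<bar>)"])
    show "integrable (PP I) (\<lambda>x. \<bar>f x0\<bar> + (\<Sum>i\<in>I. \<bar>x i\<bar>))"
      using fin intc by (intro Bochner_Integration.integrable_add integrable_sum) (auto simp: finite_measure.integrable_const)
    show "AE x in PP I. norm (f x) \<le> norm (\<bar>f x0\<bar> + (\<Sum>i\<in>I. \<bar>x i\<bar>))"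
    proof (rule AE_I2)
      fix x assume x: "x \<in> space (PP I)"
      have "0 \<le> (\<Sum>i\<in>I. \<bar>x i\<bar>)" by (simp add: sum_nonneg)
      then show "norm (f x) \<le> norm (\<bar>f x0\<bar> + (\<Sum>i\<in>I. \<bar>x i\<bar>))"
        using b[OF x] by simp
    qed
  qed (rule m)
  show "integrable (PP I) (\<lambda>x. (f x)\<^sup>2)"
  proof (rule Bochner_Integration.integrable_bound[of _ "\<lambda>x. 2 * (f x0)\<^sup>2 + 2 * real (card I) * (\<Sum>i\<in>I. (x i)\<^sup>2)"])
    show "integrable (PP I) (\<lambda>x. 2 * (f x0)\<^sup>2 + 2 * real (card I) * (\<Sum>i\<in>I. (x i)\<^sup>2))"
      using fin intc2 by (intro Bochner_Integration.integrable_add integrable_sum integrable_mult_right) (auto simp: finite_measure.integrable_const)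
    show "(\<lambda>x. (f x)\<^sup>2) \<in> borel_measurable (PP I)" using m by measurable
    show "AE x in PP I. norm ((f x)\<^sup>2) \<le> norm (2 * (f x0)\<^sup>2 + 2 * real (card I) * (\<Sum>i\<in>I. (x i)\<^sup>2))"
    proof (rule AE_I2)
      fix x assume x: "x \<in> space (PP I)"
      let ?c = "\<bar>f x0\<bar>" and ?S = "\<Sum>i\<in>I. \<bar>x i\<bar>"
      have S0: "0 \<le> ?S" by (simp add: sum_nonneg)
      have "(f x)\<^sup>2 \<le> (?c + ?S)\<^sup>2"
        using b[OF x] by (metis abs_ge_zero abs_le_square_iff abs_of_nonneg add_nonneg_nonneg order_trans S0)
      also have "\<dots> = 2 * ?c\<^sup>2 + 2 * ?S\<^sup>2 - (?c - ?S)\<^sup>2"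
        by (simp add: power2_eq_square algebra_simps)
      also have "\<dots> \<le> 2 * ?c\<^sup>2 + 2 * ?S\<^sup>2" by simp
      also have "?S\<^sup>2 \<le> (\<Sum>i\<in>I. (\<bar>x i\<bar>)\<^sup>2) * real (card I)"
        by (rule sum_squared_le_sum_of_squares)
      finally have "(f x)\<^sup>2 \<le> 2 * (f x0)\<^sup>2 + 2 * real (card I) * (\<Sum>i\<in>I. (x i)\<^sup>2)"
        by (simp add: algebra_simps)
      then show "norm ((f x)\<^sup>2) \<le> norm (2 * (f x0)\<^sup>2 + 2 * real (card I) * (\<Sum>i\<in>I. (x i)\<^sup>2))"
        by (simp add: sum_nonneg)
    qed
  qed
qed

lemma PSF: "product_sigma_finite (\<lambda>_::'i. \<mu>)"
  using PS unfolding product_prob_space_def by blast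

lemma lipP_meas: "lipP I f \<Longrightarrow> f \<in> borel_measurable (PP I)"
  unfolding lipP_def by blast

lemma lipP_fix:
  assumes "lipP (insert a I) f" "a \<notin> I"
  shows "lipP I (\<lambda>x. f (x(a:=t)))"
  unfolding lipP_def
proof (intro conjI ballI allI)
  show "(\<lambda>x. f (x(a:=t))) \<in> borel_measurable (PP I)"
    using measurable_comp[OF meas_upd1[of a t I] lipP_meas[OF assms(1)]] by (simp add: comp_def)
  fix x i s assume x: "x \<in> space (PP I)" and i: "i \<in> I"
  have ia: "i \<noteq> a" using i assms(2) by auto
  have "\<bar>f (x(a:=t)) - f ((x(a:=t))(i:=s))\<bar> \<le> \<bar>(x(a:=t)) i - s\<bar>"
    using assms(1) upd_in[OF x, of a t] i unfolding lipP_def by blast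
  moreover have "(x(a:=t))(i:=s) = (x(i:=s))(a:=t)" using ia by (intro fun_upd_twist) auto
  ultimately show "\<bar>f (x(a:=t)) - f ((x(i:=s))(a:=t))\<bar> \<le> \<bar>x i - s\<bar>" using ia by simp
qed

lemma lipP_fix_in:
  assumes "lipP I f" "i \<in> I"
  shows "lipP I (\<lambda>z. f (z(i:=t)))"
  unfolding lipP_def
proof (intro conjI ballI allI)
  have insI: "insert i I = I" using assms(2) by auto
  have m: "(\<lambda>x. x(i:=t)) \<in> measurable (PP I) (PP I)" using meas_upd1[of i t I] by (simp only: insI)
  show "(\<lambda>z. f (z(i:=t))) \<in> borel_measurable (PP I)"
    using measurable_comp[OF m lipP_meas[OF assms(1)]] by (simp add: comp_def)
  fix z j s assume z: "z \<in> space (PP I)" and j: "j \<in> I"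
  show "\<bar>f (z(i:=t)) - f ((z(j:=s))(i:=t))\<bar> \<le> \<bar>z j - s\<bar>"
  proof (cases "j = i")
    case True then show ?thesis by simp
  next
    case False
    have "\<bar>f (z(i:=t)) - f ((z(i:=t))(j:=s))\<bar> \<le> \<bar>(z(i:=t)) j - s\<bar>"
      using assms(1) upd_in'[OF z assms(2)] j unfolding lipP_def by blast
    moreover have "(z(i:=t))(j:=s) = (z(j:=s))(i:=t)" using False by (intro fun_upd_twist) auto
    ultimately show ?thesis using False by simp
  qed
qed

lemma lipP_slice:
  assumes "lipP (insert a I) f" "x \<in> space (PP I)"
  shows "lip1 (\<lambda>t. f (x(a:=t)))"
  unfolding lip1_def
proof (intro allI)
  fix s t
  have "\<bar>f (x(a:=s)) - f ((x(a:=s))(a:=t))\<bar> \<le> \<bar>(x(a:=s)) a - t\<bar>"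
    using assms(1) upd_in[OF assms(2), of a s] unfolding lipP_def by blast
  then show "\<bar>f (x(a:=s)) - f (x(a:=t))\<bar> \<le> \<bar>s - t\<bar>" by simp
qed

lemma lip1_shift: "lip1 \<phi> \<Longrightarrow> lip1 (\<lambda>t. \<phi> t - c)"
  unfolding lip1_def by simp

lemma int_diff_bound:
  fixes u v :: "'a \<Rightarrow> real"
  assumes "prob_space M" "integrable M u" "integrable M v" "\<And>x. x \<in> space M \<Longrightarrow> \<bar>u x - v x\<bar> \<le> c"
  shows "\<bar>(\<integral>x. u x \<partial>M) - (\<integral>x. v x \<partial>M)\<bar> \<le> c"
proof -
  interpret prob_space M by fact
  have "(\<integral>x. u x \<partial>M) - (\<integral>x. v x \<partial>M) = (\<integral>x. u x - v x \<partial>M)"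
    using assms by simp
  moreover have "(\<integral>x. u x - v x \<partial>M) \<le> (\<integral>x. c \<partial>M)"
    using assms by (intro integral_mono) (auto simp: abs_le_iff)
  moreover have "(\<integral>x. -c \<partial>M) \<le> (\<integral>x. u x - v x \<partial>M)"
  proof (rule integral_mono)
    fix x assume "x \<in> space M" then have "\<bar>u x - v x\<bar> \<le> c" by (rule assms(4))
    then show "-c \<le> u x - v x" by linarith
  qed (use assms in auto)
  ultimately show ?thesis by (simp add: prob_space)
qed

definition Eo :: "'i \<Rightarrow> (('i \<Rightarrow> real) \<Rightarrow> real) \<Rightarrow> ('i \<Rightarrow> real) \<Rightarrow> real" where
  "Eo a f x = (\<integral>t. f (x(a:=t)) \<partial>\<mu>)"

lemma joint_meas:
  assumes "f \<in> borel_measurable (PP (insert a I))"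
  shows "(\<lambda>(x,t). f (x(a:=t))) \<in> borel_measurable (PP I \<Otimes>\<^sub>M \<mu>)"
proof -
  have "(\<lambda>z. (fst z)(a:=snd z)) \<in> measurable (PP I \<Otimes>\<^sub>M \<mu>) (PP (insert a I))"
    by (rule measurable_fun_upd[where J=I]) auto
  from measurable_comp[OF this assms]
  have "(\<lambda>z. f ((fst z)(a:=snd z))) \<in> borel_measurable (PP I \<Otimes>\<^sub>M \<mu>)" by (simp add: comp_def)
  moreover have "(\<lambda>(x,t). f (x(a:=t))) = (\<lambda>z. f ((fst z)(a:=snd z)))" by (simp add: fun_eq_iff)
  ultimately show ?thesis by simp
qed

lemma Eo_meas:
  assumes "f \<in> borel_measurable (PP (insert a I))"
  shows "Eo a f \<in> borel_measurable (PP I)"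
  unfolding Eo_def
  by (rule sigma_finite_measure.borel_measurable_lebesgue_integral[OF prob_space_imp_sigma_finite[OF Pmu]])
     (rule joint_meas[OF assms])

lemma lipP_Eo:
  assumes "lipP (insert a I) f" "a \<notin> I"
  shows "lipP I (Eo a f)"
  unfolding lipP_def
proof (intro conjI ballI allI)
  show "Eo a f \<in> borel_measurable (PP I)" by (rule Eo_meas[OF lipP_meas[OF assms(1)]])
  fix x i s assume x: "x \<in> space (PP I)" and i: "i \<in> I"
  have x': "x(i:=s) \<in> space (PP I)" using upd_in'[OF x i] .
  have ia: "i \<noteq> a" using i assms(2) by auto
  show "\<bar>Eo a f x - Eo a f (x(i:=s))\<bar> \<le> \<bar>x i - s\<bar>"
    unfolding Eo_def
  proof (rule int_diff_bound[OF Pmu])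
    show "integrable \<mu> (\<lambda>t. f (x(a:=t)))" using lip1_int(2)[OF lipP_slice[OF assms(1) x]] .
    show "integrable \<mu> (\<lambda>t. f ((x(i:=s))(a:=t)))" using lip1_int(2)[OF lipP_slice[OF assms(1) x']] .
    fix t
    have "\<bar>f (x(a:=t)) - f ((x(a:=t))(i:=s))\<bar> \<le> \<bar>(x(a:=t)) i - s\<bar>"
      using assms(1) upd_in[OF x, of a t] i unfolding lipP_def by blast
    moreover have "(x(a:=t))(i:=s) = (x(i:=s))(a:=t)" using ia by (intro fun_upd_twist) auto
    ultimately show "\<bar>f (x(a:=t)) - f ((x(i:=s))(a:=t))\<bar> \<le> \<bar>x i - s\<bar>" using ia by simp
  qed
qed

definition V0 :: real where "V0 = variance_of \<mu> (\<lambda>t. t)"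

lemma slice_var_le:
  assumes "lip1 \<phi>"
  shows "variance_of \<mu> \<phi> \<le> V0"
proof -
  let ?m = "\<integral>t. t \<partial>\<mu>"
  have "variance_of \<mu> \<phi> \<le> (\<integral>t. (\<phi> t - \<phi> ?m)\<^sup>2 \<partial>\<mu>)"
    using variance_le_const[OF Pmu lip1_int(2,3)[OF assms]] by blast
  also have "\<dots> \<le> (\<integral>t. (t - ?m)\<^sup>2 \<partial>\<mu>)"
  proof (rule integral_mono)
    show "integrable \<mu> (\<lambda>t. (\<phi> t - \<phi> ?m)\<^sup>2)" using lip1_int(3)[OF lip1_shift[OF assms]] .
    have "lip1 (\<lambda>t. t - ?m)" unfolding lip1_def by simp
    then show "integrable \<mu> (\<lambda>t. (t - ?m)\<^sup>2)" using lip1_int(3) by blast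
    fix t
    have "\<bar>\<phi> t - \<phi> ?m\<bar> \<le> \<bar>t - ?m\<bar>" using assms unfolding lip1_def by blast
    then show "(\<phi> t - \<phi> ?m)\<^sup>2 \<le> (t - ?m)\<^sup>2" by (simp add: abs_le_square_iff)
  qed
  finally show ?thesis unfolding V0_def variance_of_def .
qed

lemma decomp0:
  assumes fin: "finite I" and aI: "a \<notin> I" and lf: "lipP (insert a I) f"
  defines "V \<equiv> \<lambda>x. variance_of \<mu> (\<lambda>t. f (x(a:=t)))"
  shows "V \<in> borel_measurable (PP I)" "\<And>x. x \<in> space (PP I) \<Longrightarrow> 0 \<le> V x \<and> V x \<le> V0"
    "integrable (PP I) V"
    "variance_of (PP (insert a I)) f = (\<integral>x. V x \<partial>PP I) + variance_of (PP I) (Eo a f)"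
proof -
  have mf: "f \<in> borel_measurable (PP (insert a I))" using lipP_meas[OF lf] .
  have mg: "Eo a f \<in> borel_measurable (PP I)" using Eo_meas[OF mf] .
  have Veq: "V x = (\<integral>t. (f (x(a:=t)) - Eo a f x)\<^sup>2 \<partial>\<mu>)" for x
    unfolding V_def variance_of_def Eo_def ..
  have jm: "(\<lambda>(x,t). (f (x(a:=t)) - Eo a f x)\<^sup>2) \<in> borel_measurable (PP I \<Otimes>\<^sub>M \<mu>)"
  proof -
    have "(\<lambda>(x,t). f (x(a:=t))) \<in> borel_measurable (PP I \<Otimes>\<^sub>M \<mu>)" using joint_meas[OF mf] .
    moreover have "(\<lambda>(x,t). Eo a f x) \<in> borel_measurable (PP I \<Otimes>\<^sub>M \<mu>)"
      using measurable_comp[OF measurable_fst mg] by (simp add: comp_def case_prod_beta')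
    ultimately show ?thesis by (simp add: case_prod_beta')
  qed
  show mV: "V \<in> borel_measurable (PP I)"
    unfolding Veq
    by (rule sigma_finite_measure.borel_measurable_lebesgue_integral[OF prob_space_imp_sigma_finite[OF Pmu]])
       (rule jm)
  show bV: "0 \<le> V x \<and> V x \<le> V0" if x: "x \<in> space (PP I)" for x
    using slice_var_le[OF lipP_slice[OF lf x]] variance_nonneg unfolding V_def by blast
  show iV: "integrable (PP I) V"
  proof (rule finite_measure.integrable_const_bound[where B=V0])
    show "finite_measure (PP I)" using prob_PP prob_space.finite_measure by blast
    show "AE x in PP I. norm (V x) \<le> V0" using bV by (intro AE_I2) auto
  qed (rule mV)
  have lg: "lipP I (Eo a f)" using lipP_Eo[OF lf aI] .
  have ins: "integral\<^sup>L (PP (insert a I)) F = (\<integral>x. (\<integral>t. F (x(a:=t)) \<partial>\<mu>) \<partial>PP I)"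
    if "integrable (PP (insert a I)) F" for F :: "_ \<Rightarrow> real"
    using product_sigma_finite.product_integral_insert[OF PSF fin aI that] .
  have fin': "finite (insert a I)" using fin by simp
  have e1: "(\<integral>x. f x \<partial>PP (insert a I)) = (\<integral>x. Eo a f x \<partial>PP I)"
    using ins[OF lipP_int(1)[OF fin' lf]] unfolding Eo_def .
  have e2: "(\<integral>x. (f x)\<^sup>2 \<partial>PP (insert a I)) = (\<integral>x. V x + (Eo a f x)\<^sup>2 \<partial>PP I)"
  proof -
    have "(\<integral>x. (f x)\<^sup>2 \<partial>PP (insert a I)) = (\<integral>x. (\<integral>t. (f (x(a:=t)))\<^sup>2 \<partial>\<mu>) \<partial>PP I)"
      using ins[OF lipP_int(2)[OF fin' lf]] .
    also have "\<dots> = (\<integral>x. V x + (Eo a f x)\<^sup>2 \<partial>PP I)"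
    proof (rule Bochner_Integration.integral_cong[OF refl])
      fix x assume x: "x \<in> space (PP I)"
      have l: "lip1 (\<lambda>t. f (x(a:=t)))" using lipP_slice[OF lf x] .
      show "(\<integral>t. (f (x(a:=t)))\<^sup>2 \<partial>\<mu>) = V x + (Eo a f x)\<^sup>2"
        using variance_alt[OF Pmu lip1_int(2,3)[OF l]] unfolding V_def Eo_def by simp
    qed
    finally show ?thesis .
  qed
  have "variance_of (PP (insert a I)) f = (\<integral>x. (f x)\<^sup>2 \<partial>PP (insert a I)) - (\<integral>x. f x \<partial>PP (insert a I))\<^sup>2"
    using variance_alt[OF prob_PP lipP_int[OF fin' lf]] .
  also have "\<dots> = (\<integral>x. V x \<partial>PP I) + ((\<integral>x. (Eo a f x)\<^sup>2 \<partial>PP I) - (\<integral>x. Eo a f x \<partial>PP I)\<^sup>2)"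
    unfolding e1 e2 using iV lipP_int(2)[OF fin lg] by simp
  also have "\<dots> = (\<integral>x. V x \<partial>PP I) + variance_of (PP I) (Eo a f)"
    using variance_alt[OF prob_PP lipP_int[OF fin lg]] by simp
  finally show "variance_of (PP (insert a I)) f = (\<integral>x. V x \<partial>PP I) + variance_of (PP I) (Eo a f)" .
qed

lemma decomp:
  assumes fin: "finite I" and aI: "a \<notin> I" and lf: "lipP (insert a I) f"
  shows "\<And>x. x \<in> space (PP I) \<Longrightarrow> 0 \<le> variance_of \<mu> (\<lambda>t. f (x(a:=t))) \<and> variance_of \<mu> (\<lambda>t. f (x(a:=t))) \<le> V0"
    "integrable (PP I) (\<lambda>x. variance_of \<mu> (\<lambda>t. f (x(a:=t))))"
    "variance_of (PP (insert a I)) f = (\<integral>x. variance_of \<mu> (\<lambda>t. f (x(a:=t))) \<partial>PP I) + variance_of (PP I) (Eo a f)"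
  using decomp0[OF assms] by (simp_all add: fun_upd_def)

lemma ES:
  assumes "finite I" "lipP I f"
  shows "variance_of (PP I) f \<le> real (card I) * V0"
  using assms
proof (induction I arbitrary: f rule: finite_induct)
  case empty
  have "variance_of (PP {}) f \<le> (\<integral>x. (f x - f (\<lambda>_. undefined))\<^sup>2 \<partial>PP {})"
    using variance_le_const[OF prob_PP lipP_int[OF _ empty.prems]] by simp
  also have "(\<integral>x. (f x - f (\<lambda>_. undefined))\<^sup>2 \<partial>PP {}) = 0"
    by (rule integral_eq_zero_AE, rule AE_I2) (simp add: space_PP)
  finally show ?case by simp
next
  case (insert a I f)
  let ?V = "\<lambda>x. variance_of \<mu> (\<lambda>t. f (x(a:=t)))"
  note D = decomp[OF insert.hyps(1,2) insert.prems]
  have "(\<integral>x. ?V x \<partial>PP I) \<le> (\<integral>x. V0 \<partial>PP I)"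
    by (rule integral_mono[OF D(2) finite_measure.integrable_const[OF prob_space.finite_measure[OF prob_PP[of I]]]])
       (use D(1) in blast)
  also have "\<dots> = V0" using prob_space.prob_space[OF prob_PP[of I]] by simp
  finally have "(\<integral>x. ?V x \<partial>PP I) \<le> V0" .
  moreover have "variance_of (PP I) (Eo a f) \<le> real (card I) * V0"
    using insert.IH[OF lipP_Eo[OF insert.prems insert.hyps(2)]] .
  moreover have "real (card (insert a I)) * V0 = V0 + real (card I) * V0"
    using insert.hyps by (simp add: algebra_simps)
  ultimately show ?case using D(3) by linarith
qed

definition hh :: "'i set \<Rightarrow> (('i \<Rightarrow> real) \<Rightarrow> real) \<Rightarrow> 'i \<Rightarrow> real \<Rightarrow> real" where
  "hh I f i t = (\<integral>z. f (z(i:=t)) \<partial>PP I)"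

lemma hh_lip1:
  assumes "finite I" "lipP I f" "i \<in> I"
  shows "lip1 (hh I f i)"
  unfolding lip1_def hh_def
proof (intro allI)
  fix t s
  show "\<bar>(\<integral>z. f (z(i:=t)) \<partial>PP I) - (\<integral>z. f (z(i:=s)) \<partial>PP I)\<bar> \<le> \<bar>t - s\<bar>"
  proof (rule int_diff_bound[OF prob_PP])
    show "integrable (PP I) (\<lambda>z. f (z(i:=t)))" by (rule lipP_int(1)[OF assms(1) lipP_fix_in[OF assms(2,3)]])
    show "integrable (PP I) (\<lambda>z. f (z(i:=s)))" by (rule lipP_int(1)[OF assms(1) lipP_fix_in[OF assms(2,3)]])
    fix z assume z: "z \<in> space (PP I)"
    have "\<bar>f (z(i:=t)) - f ((z(i:=t))(i:=s))\<bar> \<le> \<bar>(z(i:=t)) i - s\<bar>"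
      using assms(2) upd_in'[OF z assms(3)] assms(3) unfolding lipP_def by blast
    then show "\<bar>f (z(i:=t)) - f (z(i:=s))\<bar> \<le> \<bar>t - s\<bar>" by simp
  qed
qed

lemma sq_diff_int:
  fixes u v :: "'a \<Rightarrow> real"
  assumes "u \<in> borel_measurable M" "v \<in> borel_measurable M"
    "integrable M (\<lambda>x. (u x)\<^sup>2)" "integrable M (\<lambda>x. (v x)\<^sup>2)"
  shows "integrable M (\<lambda>x. (u x - v x)\<^sup>2)"
proof (rule Bochner_Integration.integrable_bound[of _ "\<lambda>x. 2 * (u x)\<^sup>2 + 2 * (v x)\<^sup>2"])
  show "integrable M (\<lambda>x. 2 * (u x)\<^sup>2 + 2 * (v x)\<^sup>2)"
    using assms by (intro Bochner_Integration.integrable_add integrable_mult_right) auto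
  show "(\<lambda>x. (u x - v x)\<^sup>2) \<in> borel_measurable M" using assms by measurable
  show "AE x in M. norm ((u x - v x)\<^sup>2) \<le> norm (2 * (u x)\<^sup>2 + 2 * (v x)\<^sup>2)"
  proof (rule AE_I2)
    fix x
    have "(u x - v x)\<^sup>2 = 2 * (u x)\<^sup>2 + 2 * (v x)\<^sup>2 - (u x + v x)\<^sup>2"
      by (simp add: power2_eq_square algebra_simps)
    also have "\<dots> \<le> 2 * (u x)\<^sup>2 + 2 * (v x)\<^sup>2" by simp
    finally show "norm ((u x - v x)\<^sup>2) \<le> norm (2 * (u x)\<^sup>2 + 2 * (v x)\<^sup>2)" by simp
  qed
qed

lemma PSF2: "pair_sigma_finite (PP I) \<mu>"
  unfolding pair_sigma_finite_def
  using prob_space_imp_sigma_finite[OF prob_PP] prob_space_imp_sigma_finite[OF Pmu] by blast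

lemma LB:
  assumes "finite I" "lipP I f"
  shows "(\<Sum>i\<in>I. variance_of \<mu> (hh I f i)) \<le> variance_of (PP I) f"
  using assms
proof (induction I arbitrary: f rule: finite_induct)
  case empty
  then show ?case using variance_nonneg by simp
next
  case (insert a I f)
  note fin = insert.hyps(1) and aI = insert.hyps(2) and lf = insert.prems
  have fin': "finite (insert a I)" using fin by simp
  let ?g = "Eo a f"
  let ?V = "\<lambda>x. variance_of \<mu> (\<lambda>t. f (x(a:=t)))"
  note D = decomp[OF fin aI lf]
  have lg: "lipP I ?g" using lipP_Eo[OF lf aI] .
  have mf: "f \<in> borel_measurable (PP (insert a I))" using lipP_meas[OF lf] .
  have mg: "?g \<in> borel_measurable (PP I)" using lipP_meas[OF lg] .
  have ins: "integral\<^sup>L (PP (insert a I)) F = (\<integral>x. (\<integral>t. F (x(a:=t)) \<partial>\<mu>) \<partial>PP I)"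
    if "integrable (PP (insert a I)) F" for F :: "_ \<Rightarrow> real"
    using product_sigma_finite.product_integral_insert[OF PSF fin aI that] .
  have ha: "hh (insert a I) f i = hh I ?g i" if i: "i \<in> I" for i
  proof
    fix t
    have ia: "i \<noteq> a" using i aI by auto
    have "hh (insert a I) f i t = (\<integral>x. (\<integral>s. f ((x(a:=s))(i:=t)) \<partial>\<mu>) \<partial>PP I)"
      unfolding hh_def
      by (rule ins[OF lipP_int(1)[OF fin' lipP_fix_in[OF lf]]]) (use i in auto)
    also have "\<dots> = (\<integral>x. ?g (x(i:=t)) \<partial>PP I)"
      unfolding Eo_def
      by (rule Bochner_Integration.integral_cong[OF refl], rule Bochner_Integration.integral_cong[OF refl])
         (simp add: fun_upd_twist[OF ia])
    finally show "hh (insert a I) f i t = hh I ?g i t" unfolding hh_def .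
  qed
  let ?\<Phi> = "hh (insert a I) f a"
  have Phi: "?\<Phi> t = (\<integral>x. f (x(a:=t)) \<partial>PP I)" for t
  proof -
    have "?\<Phi> t = (\<integral>x. (\<integral>s. f ((x(a:=s))(a:=t)) \<partial>\<mu>) \<partial>PP I)"
      unfolding hh_def
      by (rule ins[OF lipP_int(1)[OF fin' lipP_fix_in[OF lf]]]) simp
    also have "\<dots> = (\<integral>x. f (x(a:=t)) \<partial>PP I)"
      using prob_space.prob_space[OF Pmu] by simp
    finally show ?thesis .
  qed
  have lPhi: "lip1 ?\<Phi>" using hh_lip1[OF fin' lf] by simp
  let ?c = "\<integral>x. ?g x \<partial>PP I"
  let ?F = "\<lambda>x t. (f (x(a:=t)) - ?g x)\<^sup>2"
  have jm: "(\<lambda>(x,t). ?F x t) \<in> borel_measurable (PP I \<Otimes>\<^sub>M \<mu>)"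
  proof -
    have "(\<lambda>(x,t). f (x(a:=t))) \<in> borel_measurable (PP I \<Otimes>\<^sub>M \<mu>)" using joint_meas[OF mf] .
    moreover have "(\<lambda>(x,t). ?g x) \<in> borel_measurable (PP I \<Otimes>\<^sub>M \<mu>)"
      using measurable_comp[OF measurable_fst mg] by (simp add: comp_def case_prod_beta')
    ultimately show ?thesis by (simp add: case_prod_beta')
  qed
  have Veq: "?V x = (\<integral>t. ?F x t \<partial>\<mu>)" for x
    unfolding variance_of_def Eo_def ..
  have intF: "integrable (PP I \<Otimes>\<^sub>M \<mu>) (\<lambda>(x,t). ?F x t)"
  proof (rule pair_sigma_finite.Fubini_integrable[OF PSF2 jm])
    have "integrable (PP I) ?V" by (rule D(2))
    moreover have "?V x = (\<integral>t. norm (case (x, t) of (x, t) \<Rightarrow> ?F x t) \<partial>\<mu>)" for x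
      unfolding Veq by simp
    ultimately show "integrable (PP I) (\<lambda>x. \<integral>t. norm (case (x, t) of (x, t) \<Rightarrow> ?F x t) \<partial>\<mu>)"
      by simp
    show "AE x in PP I. integrable \<mu> (\<lambda>t. case (x, t) of (x, t) \<Rightarrow> ?F x t)"
    proof (rule AE_I2)
      fix x assume x: "x \<in> space (PP I)"
      show "integrable \<mu> (\<lambda>t. case (x, t) of (x, t) \<Rightarrow> ?F x t)"
        using lip1_int(3)[OF lip1_shift[OF lipP_slice[OF lf x], of "Eo a f x"]] by (simp add: fun_upd_def)
    qed
  qed
  have intT: "integrable \<mu> (\<lambda>t. \<integral>x. ?F x t \<partial>PP I)"
    using pair_sigma_finite.integrable_snd[OF PSF2 intF] .
  have swap: "(\<integral>t. (\<integral>x. ?F x t \<partial>PP I) \<partial>\<mu>) = (\<integral>x. (\<integral>t. ?F x t \<partial>\<mu>) \<partial>PP I)"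
    using pair_sigma_finite.Fubini_integral[OF PSF2 intF] .
  have pt: "(?\<Phi> t - ?c)\<^sup>2 \<le> (\<integral>x. ?F x t \<partial>PP I)" for t
  proof -
    have i1: "integrable (PP I) (\<lambda>x. f (x(a:=t)))" using lipP_int(1)[OF fin lipP_fix[OF lf aI]] .
    have i1': "integrable (PP I) (\<lambda>x. (f (x(a:=t)))\<^sup>2)" using lipP_int(2)[OF fin lipP_fix[OF lf aI]] .
    have i2: "integrable (PP I) ?g" using lipP_int(1)[OF fin lg] .
    have i2': "integrable (PP I) (\<lambda>x. (?g x)\<^sup>2)" using lipP_int(2)[OF fin lg] .
    have "?\<Phi> t - ?c = (\<integral>x. f (x(a:=t)) - ?g x \<partial>PP I)"
      unfolding Phi using i1 i2 by simp
    moreover have "(\<integral>x. f (x(a:=t)) - ?g x \<partial>PP I)\<^sup>2 \<le> (\<integral>x. (f (x(a:=t)) - ?g x)\<^sup>2 \<partial>PP I)"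
    proof (rule jensen_sq[OF prob_PP])
      show "integrable (PP I) (\<lambda>x. f (x(a:=t)) - ?g x)" using i1 i2 by simp
      show "integrable (PP I) (\<lambda>x. (f (x(a:=t)) - ?g x)\<^sup>2)"
        by (rule sq_diff_int[OF lipP_meas[OF lipP_fix[OF lf aI]] mg i1' i2'])
    qed
    ultimately show ?thesis by simp
  qed
  have "variance_of \<mu> ?\<Phi> \<le> (\<integral>t. (?\<Phi> t - ?c)\<^sup>2 \<partial>\<mu>)"
    using variance_le_const[OF Pmu lip1_int(2,3)[OF lPhi]] by blast
  also have "\<dots> \<le> (\<integral>t. (\<integral>x. ?F x t \<partial>PP I) \<partial>\<mu>)"
    by (rule integral_mono[OF lip1_int(3)[OF lip1_shift[OF lPhi]] intT pt])
  also have "\<dots> = (\<integral>x. ?V x \<partial>PP I)" unfolding swap Veq ..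
  finally have b: "variance_of \<mu> ?\<Phi> \<le> (\<integral>x. ?V x \<partial>PP I)" .
  have "(\<Sum>i\<in>I. variance_of \<mu> (hh (insert a I) f i)) = (\<Sum>i\<in>I. variance_of \<mu> (hh I ?g i))"
    using ha by (intro sum.cong) auto
  also have "\<dots> \<le> variance_of (PP I) ?g" using insert.IH[OF lg] .
  finally have c: "(\<Sum>i\<in>I. variance_of \<mu> (hh (insert a I) f i)) \<le> variance_of (PP I) ?g" .
  have "(\<Sum>i\<in>insert a I. variance_of \<mu> (hh (insert a I) f i)) =
    variance_of \<mu> ?\<Phi> + (\<Sum>i\<in>I. variance_of \<mu> (hh (insert a I) f i))"
    by (rule sum.insert[OF fin aI])
  then show ?case
    using b c D(3) by linarith
qed

lemma FPS: "finite I \<Longrightarrow> finite_product_prob_space (\<lambda>_. \<mu>) I"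
  unfolding finite_product_prob_space_def finite_product_sigma_finite_def finite_product_sigma_finite_axioms_def
  using PSF PS by (simp add: product_prob_space_def product_prob_space_axioms_def)

lemma PiE_measure:
  assumes "finite I" "\<And>i. i \<in> I \<Longrightarrow> A i \<in> sets borel"
  shows "measure (PP I) (PiE I A) = (\<Prod>i\<in>I. measure \<mu> (A i))"
  using finite_product_prob_space.prob_times[OF FPS[OF assms(1)], of A] assms(2) Smu by simp

lemma var_lower:
  assumes mono: "\<And>s t. s \<le> t \<Longrightarrow> h s \<le> h t" and l: "lip1 h"
    and ab: "a < b" and D: "h b - h a \<ge> D" "D \<ge> 0"
  shows "variance_of \<mu> h \<ge> D\<^sup>2 / 4 * min (measure \<mu> {..a}) (measure \<mu> {b..})"
proof -
  interpret prob_space \<mu> by (rule Pmu)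
  define m where "m = (\<integral>t. h t \<partial>\<mu>)"
  have iq: "integrable \<mu> (\<lambda>t. (h t - m)\<^sup>2)" using lip1_int(3)[OF lip1_shift[OF l]] .
  have var: "variance_of \<mu> h = (\<integral>t. (h t - m)\<^sup>2 \<partial>\<mu>)" unfolding variance_of_def m_def ..
  have bound: "variance_of \<mu> h \<ge> D\<^sup>2 / 4 * measure \<mu> A"
    if A: "A \<in> sets borel" and pt: "\<And>t. t \<in> A \<Longrightarrow> (h t - m)\<^sup>2 \<ge> D\<^sup>2 / 4" for A
  proof -
    have As: "A \<in> sets \<mu>" using A Smu by simp
    have "(\<integral>t. D\<^sup>2 / 4 * indicator A t \<partial>\<mu>) \<le> (\<integral>t. (h t - m)\<^sup>2 \<partial>\<mu>)"
    proof (rule integral_mono[OF _ iq])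
      show "integrable \<mu> (\<lambda>t. D\<^sup>2 / 4 * indicator A t)"
        using As by (intro integrable_mult_right integrable_real_indicator) (auto simp: emeasure_eq_measure)
      fix t show "D\<^sup>2 / 4 * indicator A t \<le> (h t - m)\<^sup>2"
        using pt[of t] by (cases "t \<in> A") auto
    qed
    moreover have "(\<integral>t. D\<^sup>2 / 4 * indicator A t \<partial>\<mu>) = D\<^sup>2 / 4 * measure \<mu> A"
      using As by simp
    ultimately show ?thesis using var by simp
  qed
  have sq: "(x::real) \<ge> D / 2 \<Longrightarrow> x\<^sup>2 \<ge> D\<^sup>2 / 4" for x
  proof -
    assume "x \<ge> D / 2"
    then have "(D/2)\<^sup>2 \<le> x\<^sup>2" using D(2) by (intro power_mono) auto
    then show ?thesis by (simp add: power_divide)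
  qed
  show ?thesis
  proof (cases "m \<ge> (h a + h b) / 2")
    case True
    have "variance_of \<mu> h \<ge> D\<^sup>2 / 4 * measure \<mu> {..a}"
    proof (rule bound)
      fix t assume "t \<in> {..a}"
      then have "h t \<le> h a" using mono by simp
      moreover have "h a + h b \<le> 2 * m" using True by simp
      ultimately have "2 * m - 2 * h t \<ge> D" using D by linarith
      then have "m - h t \<ge> D / 2" by simp
      then have "(m - h t)\<^sup>2 \<ge> D\<^sup>2 / 4" by (rule sq)
      then show "(h t - m)\<^sup>2 \<ge> D\<^sup>2 / 4" by (simp add: power2_commute)
    qed simp
    moreover have "D\<^sup>2 / 4 * min (measure \<mu> {..a}) (measure \<mu> {b..}) \<le> D\<^sup>2 / 4 * measure \<mu> {..a}"
      by (intro mult_left_mono) auto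
    ultimately show ?thesis by linarith
  next
    case False
    have "variance_of \<mu> h \<ge> D\<^sup>2 / 4 * measure \<mu> {b..}"
    proof (rule bound)
      fix t assume "t \<in> {b..}"
      then have "h b \<le> h t" using mono by simp
      moreover have "h a + h b > 2 * m" using False by simp
      ultimately have "2 * h t - 2 * m \<ge> D" using D by linarith
      then have "h t - m \<ge> D / 2" by simp
      then show "(h t - m)\<^sup>2 \<ge> D\<^sup>2 / 4" by (rule sq)
    qed simp
    moreover have "D\<^sup>2 / 4 * min (measure \<mu> {..a}) (measure \<mu> {b..}) \<le> D\<^sup>2 / 4 * measure \<mu> {b..}"
      by (intro mult_left_mono) auto
    ultimately show ?thesis by linarith
  qed
qed

lemma comp_meas: "s \<in> I \<Longrightarrow> (\<lambda>x. x s) \<in> borel_measurable (PP I)"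
proof -
  assume "s \<in> I"
  then have "(\<lambda>x. x s) \<in> measurable (PP I) \<mu>" by (rule measurable_component_singleton)
  moreover have "measurable (PP I) \<mu> = measurable (PP I) borel" by (rule measurable_cong_sets[OF refl Smu])
  ultimately show ?thesis by simp
qed

lemma H_lipP: "lipP (torus_sites n d) (ground_energy n d)"
  unfolding lipP_def
proof (intro conjI ballI allI)
  have eq: "ground_energy n d = (\<lambda>x. MIN M\<in>{M. is_matching n d M}. energy x M)"
    by (rule ext) (simp add: ge_eq)
  have "(\<lambda>x. MIN M\<in>{M. is_matching n d M}. energy x M) \<in> borel_measurable (PP (torus_sites n d))"
  proof (rule borel_measurable_Min[OF matchings_fin])
    fix M assume "M \<in> {M. is_matching n d M}"
    then have Ms: "M \<subseteq> torus_sites n d" using match_sub by blast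
    show "(\<lambda>x. energy x M) \<in> borel_measurable (PP (torus_sites n d))"
      unfolding energy_def
    proof (rule borel_measurable_sum)
      fix s assume "s \<in> M"
      then have "s \<in> torus_sites n d" using Ms by blast
      then show "(\<lambda>x. x s) \<in> borel_measurable (PP (torus_sites n d))" by (rule comp_meas)
    qed
  qed
  then show "ground_energy n d \<in> borel_measurable (PP (torus_sites n d))" unfolding eq .
  fix x i t
  show "\<bar>ground_energy n d x - ground_energy n d (x(i:=t))\<bar> \<le> \<bar>x i - t\<bar>" by (rule ge_lip)
qed

lemma vertex_var:
  assumes n: "n \<ge> 2" and v: "v \<in> torus_verts n d" and c0: "c0 \<ge> 0"
    and q: "0 \<le> q" "q \<le> 1" "q \<le> measure \<mu> {..<c0+1}" "q \<le> measure \<mu> {2*c0+3<..}"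
  shows "variance_of \<mu> (hh (torus_sites n d) (ground_energy n d) (Vtx v))
     \<ge> (q ^ (4*d))\<^sup>2 / 4 * min (measure \<mu> {..c0+1}) (measure \<mu> {c0+2..})"
proof -
  let ?I = "torus_sites n d" and ?H = "ground_energy n d" and ?s = "Vtx v"
  have fin: "finite ?I" by (rule finite_sites)
  have lH: "lipP ?I ?H" by (rule H_lipP)
  have sI: "?s \<in> ?I" using v unfolding torus_sites_def by blast
  let ?h = "hh ?I ?H ?s"
  have lh: "lip1 ?h" by (rule hh_lip1[OF fin lH sI])
  have intf: "integrable (PP ?I) (\<lambda>z. ?H (z(?s:=t)))" for t
    by (rule lipP_int(1)[OF fin lipP_fix_in[OF lH sI]])
  have mono: "?h t1 \<le> ?h t2" if "t1 \<le> t2" for t1 t2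
    unfolding hh_def by (rule integral_mono[OF intf intf]) (rule ge_mono[OF that])
  define Evs where "Evs = {e \<in> torus_edges n d. v \<in> e}"
  define NB where "NB = \<Union>Evs - {v}"
  define T where "T = Edg ` Evs \<union> Vtx ` NB"
  define A where "A = (\<lambda>s. if s \<in> Edg ` Evs then {2*c0+3<..} else if s \<in> Vtx ` NB then {..<c0+1} else (UNIV::real set))"
  define Ev where "Ev = PiE ?I A"
  have Aborel: "A s \<in> sets borel" for s unfolding A_def by auto
  have Evsets: "Ev \<in> sets (PP ?I)" unfolding Ev_def
    by (rule sets_PiM_I_finite[OF fin]) (use Aborel Smu in simp)
  have pt: "indicator Ev z \<le> ?H (z(?s:=c0+2)) - ?H (z(?s:=c0+1))" if z: "z \<in> space (PP ?I)" for z
  proof (cases "z \<in> Ev")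
    case True
    let ?J = "z(?s:=c0+2)"
    have G: "\<forall>e\<in>torus_edges n d. v \<in> e \<longrightarrow> (\<forall>w\<in>e. w \<noteq> v \<longrightarrow> ?J (Vtx v) + ?J (Vtx w) < ?J (Edg e))"
    proof (intro ballI impI allI)
      fix e w assume e: "e \<in> torus_edges n d" and ve: "v \<in> e" and w: "w \<in> e" and wv: "w \<noteq> v"
      have eEvs: "e \<in> Evs" using e ve unfolding Evs_def by simp
      have wNB: "w \<in> NB" using eEvs w wv unfolding NB_def by blast
      have wV: "w \<in> torus_verts n d" using edge_sub[OF e] w by blast
      have eI: "Edg e \<in> ?I" using e unfolding torus_sites_def by blast
      have wI: "Vtx w \<in> ?I" using wV unfolding torus_sites_def by blast
      have "z (Edg e) \<in> A (Edg e)" using True eI unfolding Ev_def by blast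
      then have ze: "z (Edg e) > 2*c0+3" using eEvs unfolding A_def by auto
      have "z (Vtx w) \<in> A (Vtx w)" using True wI unfolding Ev_def by blast
      moreover have "Vtx w \<notin> Edg ` Evs" by blast
      ultimately have zw: "z (Vtx w) < c0+1" using wNB unfolding A_def by auto
      show "?J (Vtx v) + ?J (Vtx w) < ?J (Edg e)" using ze zw wv by simp
    qed
    have "?H (?J(Vtx v := c0+1)) \<le> ?H ?J - ?J (Vtx v) + (c0+1)" by (rule key_incr[OF n v G])
    then have "?H (z(?s:=c0+1)) \<le> ?H (z(?s:=c0+2)) - 1" by simp
    then show ?thesis using True by simp
  next
    case False
    have "?H (z(?s:=c0+1)) \<le> ?H (z(?s:=c0+2))" by (rule ge_mono) simp
    then show ?thesis using False by simp
  qed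
  have "measure (PP ?I) Ev = (\<integral>z. indicator Ev z \<partial>PP ?I)" using Evsets by simp
  also have "\<dots> \<le> (\<integral>z. ?H (z(?s:=c0+2)) - ?H (z(?s:=c0+1)) \<partial>PP ?I)"
  proof (rule integral_mono[OF _ _ pt])
    show "integrable (PP ?I) (indicator Ev :: _ \<Rightarrow> real)"
      using finite_measure.emeasure_finite[OF prob_space.finite_measure[OF prob_PP[of ?I]], of Ev]
      by (intro integrable_real_indicator[OF Evsets]) (simp add: less_top)
    show "integrable (PP ?I) (\<lambda>z. ?H (z(?s:=c0+2)) - ?H (z(?s:=c0+1)))" using intf by simp
  qed
  also have "\<dots> = ?h (c0+2) - ?h (c0+1)" unfolding hh_def using intf by simp
  finally have incr1: "measure (PP ?I) Ev \<le> ?h (c0+2) - ?h (c0+1)" .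
  have "measure (PP ?I) Ev = (\<Prod>s\<in>?I. measure \<mu> (A s))"
    unfolding Ev_def by (rule PiE_measure[OF fin Aborel])
  also have "\<dots> \<ge> (\<Prod>s\<in>?I. (if s \<in> T then q else 1))"
  proof (rule prod_mono, intro conjI)
    fix s assume "s \<in> ?I"
    show "0 \<le> (if s \<in> T then q else 1)" using q by simp
    have m1: "measure \<mu> UNIV = 1" using prob_space.prob_space[OF Pmu] by simp
    show "(if s \<in> T then q else 1) \<le> measure \<mu> (A s)"
      unfolding A_def T_def using q m1 by auto
  qed
  also have "(\<Prod>s\<in>?I. (if s \<in> T then q else 1)) = q ^ card (?I \<inter> T)"
  proof -
    have "(\<Prod>s\<in>?I. (if s \<in> T then q else 1)) = (\<Prod>s\<in>?I \<inter> T. q)"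
      using fin by (simp add: prod.If_cases Int_def)
    then show ?thesis by simp
  qed
  finally have m: "q ^ card (?I \<inter> T) \<le> measure (PP ?I) Ev" .
  have finEvs: "finite Evs" unfolding Evs_def using finite_edges by simp
  have finNB: "finite NB"
  proof -
    have "NB \<subseteq> torus_verts n d" unfolding NB_def Evs_def using edge_sub by blast
    then show ?thesis using finite_verts finite_subset by blast
  qed
  have "card (?I \<inter> T) \<le> card T" by (rule card_mono) (simp_all add: T_def finEvs finNB)
  also have "\<dots> \<le> card (Edg ` Evs) + card (Vtx ` NB)" unfolding T_def by (rule card_Un_le)
  also have "\<dots> \<le> card Evs + card NB" by (intro add_mono card_image_le finEvs finNB)
  also have "\<dots> \<le> 2 * d + 2 * d"
    using card_edges_at[OF v] card_nbrs_at[OF v] unfolding Evs_def NB_def by (intro add_mono)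
  finally have cT: "card (?I \<inter> T) \<le> 4 * d" by simp
  have "q ^ (4*d) \<le> q ^ card (?I \<inter> T)" by (rule power_decreasing[OF cT q(1,2)])
  then have D: "?h (c0+2) - ?h (c0+1) \<ge> q ^ (4*d)" using m incr1 by linarith
  show ?thesis
    by (rule var_lower[OF mono lh _ D]) (use q in simp_all)
qed

end


lemma good_wsp:
  assumes g: "good_density p \<beta>" and dl: "\<delta> > 0"
    and mom: "integrable (weight_dist p) (\<lambda>x. \<bar>x\<bar> powr (4 + \<delta>))"
  shows "wsp (weight_dist p)"
proof -
  have P: "prob_space (weight_dist p)" using g unfolding good_density_def weight_dist_def by blast
  have S: "sets (weight_dist p) = sets borel" unfolding weight_dist_def by simp
  have M2: "integrable (weight_dist p) (\<lambda>t. t\<^sup>2)"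
  proof (rule Bochner_Integration.integrable_bound[of _ "\<lambda>t. 1 + \<bar>t\<bar> powr (4 + \<delta>)"])
    show "integrable (weight_dist p) (\<lambda>t. 1 + \<bar>t\<bar> powr (4 + \<delta>))"
      using mom prob_space.finite_measure[OF P]
      by (intro Bochner_Integration.integrable_add) (auto simp: finite_measure.integrable_const)
    have eq: "borel_measurable (weight_dist p) = borel_measurable borel" by (rule measurable_cong_sets[OF S refl])
    show "(\<lambda>t. t\<^sup>2) \<in> borel_measurable (weight_dist p)" unfolding eq
      by (rule borel_measurable_continuous_onI) (intro continuous_intros)
    show "AE t in weight_dist p. norm (t\<^sup>2) \<le> norm (1 + \<bar>t\<bar> powr (4 + \<delta>))"
    proof (rule AE_I2)
      fix t :: real
      have "t\<^sup>2 \<le> 1 + \<bar>t\<bar> powr (4 + \<delta>)"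
      proof (cases "\<bar>t\<bar> \<le> 1")
        case True
        then have "t\<^sup>2 \<le> 1" by (simp add: abs_square_le_1)
        then show ?thesis by (smt (verit) powr_ge_zero)
      next
        case False
        then have "\<bar>t\<bar> powr 2 \<le> \<bar>t\<bar> powr (4 + \<delta>)" using dl by (intro powr_mono) auto
        moreover have "\<bar>t\<bar> powr 2 = t\<^sup>2" using False by (simp add: powr_numeral)
        ultimately show ?thesis by simp
      qed
      then show "norm (t\<^sup>2) \<le> norm (1 + \<bar>t\<bar> powr (4 + \<delta>))" by simp
    qed
  qed
  show ?thesis unfolding wsp_def using P S M2 by blast
qed

lemma dens_pos:
  assumes g: "good_density p \<beta>" and lo: "\<beta> < ereal lo" and hi: "lo < hi"
  shows "measure (weight_dist p) {lo<..<hi} > 0"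
proof (rule ccontr)
  let ?A = "{lo<..<hi}"
  have P: "prob_space (weight_dist p)" using g unfolding good_density_def weight_dist_def by blast
  have pm: "p \<in> borel_measurable borel" and pos: "\<And>x. \<beta> < ereal x \<Longrightarrow> p x > 0"
    using g unfolding good_density_def by auto
  assume "\<not> measure (weight_dist p) ?A > 0"
  then have "measure (weight_dist p) ?A = 0" using measure_nonneg[of "weight_dist p" ?A] by linarith
  then have "emeasure (weight_dist p) ?A = 0"
    using finite_measure.emeasure_eq_measure[OF prob_space.finite_measure[OF P]] by simp
  then have "(\<integral>\<^sup>+x. ennreal (p x) * indicator ?A x \<partial>lborel) = 0"
    unfolding weight_dist_def using pm by (subst (asm) emeasure_density) auto
  then have "AE x in lborel. ennreal (p x) * indicator ?A x = 0"
    using pm by (subst (asm) nn_integral_0_iff_AE) auto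
  then have "AE x in lborel. x \<notin> ?A"
  proof (rule AE_mp, intro AE_I2 impI)
    fix x assume "ennreal (p x) * indicator ?A x = 0"
    moreover have "x \<in> ?A \<Longrightarrow> p x > 0" using lo pos[of x] by (auto simp: less_ereal.simps(1) order.strict_trans)
    ultimately show "x \<notin> ?A" by (auto simp: indicator_def)
  qed
  then have "?A \<in> null_sets lborel" by (subst AE_iff_null_sets) auto
  then have "emeasure lborel ?A = 0" by auto
  then show False using hi by simp
qed

theorem lemma6p1:
  fixes d :: nat and p :: "real \<Rightarrow> real" and \<beta> :: ereal and \<delta> :: real
  assumes "d \<ge> 2"
    and "good_density p \<beta>"
    and "\<delta> > 0"
    and "integrable (weight_dist p) (\<lambda>x. \<bar>x\<bar> powr (4 + \<delta>))"
  shows "\<exists>C1 C2. C1 > 0 \<and> C2 > 0 \<and>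
           (\<forall>n\<ge>3. C1 * real n ^ d \<le> variance_of (weight_field p n d) (ground_energy n d)
                 \<and> variance_of (weight_field p n d) (ground_energy n d) \<le> C2 * real n ^ d)"
proof -
  let ?\<mu> = "weight_dist p"
  interpret W: wsp ?\<mu> by (rule good_wsp[OF assms(2,3,4)])
  have g: "good_density p \<beta>" by (rule assms(2))
  obtain c0 where c0: "\<beta> < ereal c0" "c0 \<ge> 0"
  proof (cases \<beta>)
    case (real r)
    have "r < max 0 (r+1)" by simp
    then have "ereal r < ereal (max 0 (r+1))" by (simp only: less_ereal.simps)
    then have "\<beta> < ereal (max 0 (r+1))" using real by simp
    moreover have "max 0 (r+1) \<ge> 0" by simp
    ultimately show ?thesis by (rule that)
  next
    case PInf
    then show ?thesis using g unfolding good_density_def by simp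
  next
    case MInf
    then show ?thesis using that[of 0] by simp
  qed
  have P: "prob_space ?\<mu>" by (rule W.Pmu)
  have mono: "measure ?\<mu> A \<le> measure ?\<mu> B" if "A \<subseteq> B" "B \<in> sets borel" for A B
    using prob_space.finite_measure[OF P] that W.Smu by (intro finite_measure.finite_measure_mono) auto
  have lt: "\<beta> < ereal x" if "x \<ge> c0" for x using c0(1) that by (metis ereal_less_eq(3) order_less_le_trans)
  have p1: "measure ?\<mu> {c0<..<c0+1} > 0" by (rule dens_pos[OF g lt]) simp_all
  have p2: "measure ?\<mu> {2*c0+3<..<2*c0+4} > 0" by (rule dens_pos[OF g lt]) (use c0 in simp_all)
  have p3: "measure ?\<mu> {c0+2<..<c0+3} > 0" by (rule dens_pos[OF g lt]) simp_all
  define q where "q = min (measure ?\<mu> {..<c0+1}) (measure ?\<mu> {2*c0+3<..})"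
  have "measure ?\<mu> {c0<..<c0+1} \<le> measure ?\<mu> {..<c0+1}" by (rule mono) auto
  then have q1: "measure ?\<mu> {..<c0+1} > 0" using p1 by linarith
  have "measure ?\<mu> {2*c0+3<..<2*c0+4} \<le> measure ?\<mu> {2*c0+3<..}" by (rule mono) auto
  then have q2: "measure ?\<mu> {2*c0+3<..} > 0" using p2 by linarith
  have qpos: "q > 0" unfolding q_def using q1 q2 by simp
  have qle: "q \<le> 1" unfolding q_def using prob_space.prob_le_1[OF P] by (simp add: min.coboundedI1)
  define pa where "pa = measure ?\<mu> {..c0+1}"
  define pb where "pb = measure ?\<mu> {c0+2..}"
  have "measure ?\<mu> {c0<..<c0+1} \<le> measure ?\<mu> {..c0+1}" by (rule mono) auto
  then have pa: "pa > 0" unfolding pa_def using p1 by linarith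
  have "measure ?\<mu> {c0+2<..<c0+3} \<le> measure ?\<mu> {c0+2..}" by (rule mono) auto
  then have pb: "pb > 0" unfolding pb_def using p3 by linarith
  define C1 where "C1 = (q ^ (4*d))\<^sup>2 / 4 * min pa pb"
  define C2 where "C2 = real (d+1) * W.V0 + 1"
  have V0: "W.V0 \<ge> 0" unfolding W.V0_def by (rule variance_nonneg)
  have C1: "C1 > 0" unfolding C1_def using qpos pa pb by simp
  have C2: "C2 > 0" unfolding C2_def using V0 by (simp add: add_nonneg_pos)
  have main: "C1 * real n ^ d \<le> variance_of (weight_field p n d) (ground_energy n d)
       \<and> variance_of (weight_field p n d) (ground_energy n d) \<le> C2 * real n ^ d" if n: "n \<ge> 3" for n
  proof -
    let ?I = "torus_sites n d" and ?H = "ground_energy n d"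
    have wf: "weight_field p n d = W.PP ?I" unfolding weight_field_def ..
    have fin: "finite ?I" by (rule finite_sites)
    have lH: "W.lipP ?I ?H" by (rule W.H_lipP)
    have upper: "variance_of (W.PP ?I) ?H \<le> C2 * real n ^ d"
    proof -
      have "variance_of (W.PP ?I) ?H \<le> real (card ?I) * W.V0" by (rule W.ES[OF fin lH])
      also have "\<dots> \<le> real ((d + 1) * n ^ d) * W.V0"
      proof (rule mult_right_mono[OF _ V0])
        show "real (card ?I) \<le> real ((d + 1) * n ^ d)" using card_sites[of n d] by (simp only: of_nat_le_iff)
      qed
      also have "\<dots> \<le> C2 * real n ^ d" unfolding C2_def by (simp add: algebra_simps)
      finally show ?thesis .
    qed
    have lower: "C1 * real n ^ d \<le> variance_of (W.PP ?I) ?H"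
    proof -
      have vv: "C1 \<le> variance_of ?\<mu> (W.hh ?I ?H (Vtx v))" if v: "v \<in> torus_verts n d" for v
        unfolding C1_def pa_def pb_def
        by (rule W.vertex_var[OF _ v c0(2)]) (use n qpos qle in \<open>auto simp: q_def\<close>)
      have "C1 * real n ^ d = (\<Sum>v\<in>torus_verts n d. C1)" using card_verts[of n d] by simp
      also have "\<dots> \<le> (\<Sum>v\<in>torus_verts n d. variance_of ?\<mu> (W.hh ?I ?H (Vtx v)))"
        by (rule sum_mono) (rule vv)
      also have "\<dots> = (\<Sum>s\<in>Vtx ` torus_verts n d. variance_of ?\<mu> (W.hh ?I ?H s))"
        by (rule sum.reindex[symmetric, unfolded comp_def]) (simp add: inj_on_def)
      also have "\<dots> \<le> (\<Sum>s\<in>?I. variance_of ?\<mu> (W.hh ?I ?H s))"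
        by (rule sum_mono2[OF fin]) (auto simp: torus_sites_def variance_nonneg)
      also have "\<dots> \<le> variance_of (W.PP ?I) ?H" by (rule W.LB[OF fin lH])
      finally show ?thesis .
    qed
    show ?thesis unfolding wf using upper lower by simp
  qed
  show ?thesis using C1 C2 main by blast
qed


end
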